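(* For every type $T$ there exist a unit type $U$ and a scalar $\alpha\in\mathcal S$ such that $T\equiv\alpha.U$.
   Context: Fix a commutative ring $(\mathcal S,+,\times)$. Types: $T ::= U \mid \forall X.T \mid \alpha.T \mid \overline0$; unit types: $U ::= X \mid U\to T \mid \forall X.U$ ($\alpha\in\mathcal S$, $X$ type variables). Type equivalence $\equiv$ is the least congruence on types with $\alpha.\overline0\equiv\overline0$, $0.T\equiv\overline0$, $1.T\equiv T$, $\alpha.(\beta.T)\equiv(\alpha\times\beta).T$, $\forall X.\alpha.T\equiv\alpha.\forall X.T$. *)

theory Defs
  imports Main
begin

datatype ('v, 's) ty =
    TVar 'v
  | Arr "('v, 's) ty" "('v, 's) ty"
  | Forall 'v "('v, 's) ty"
  | Scal 's "('v, 's) ty"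
  | Zero

inductive is_unit :: "('v, 's) ty \<Rightarrow> bool" and is_type :: "('v, 's) ty \<Rightarrow> bool" where
  u_var: "is_unit (TVar X)"
| u_arr: "is_unit U \<Longrightarrow> is_type T \<Longrightarrow> is_unit (Arr U T)"
| u_all: "is_unit U \<Longrightarrow> is_unit (Forall X U)"
| t_unit: "is_unit U \<Longrightarrow> is_type U"
| t_all: "is_type T \<Longrightarrow> is_type (Forall X T)"
| t_scal: "is_type T \<Longrightarrow> is_type (Scal a T)"
| t_zero: "is_type Zero"

inductive teq :: "('v, 's::comm_ring_1) ty \<Rightarrow> ('v, 's) ty \<Rightarrow> bool" where
  ax_scal_zero: "teq (Scal a Zero) Zero"
| ax_zero_scal: "is_type T \<Longrightarrow> teq (Scal 0 T) Zero"
| ax_one_scal: "is_type T \<Longrightarrow> teq (Scal 1 T) T"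
| ax_scal_scal: "is_type T \<Longrightarrow> teq (Scal a (Scal b T)) (Scal (a * b) T)"
| ax_all_scal: "is_type T \<Longrightarrow> teq (Forall X (Scal a T)) (Scal a (Forall X T))"
| refl: "is_type T \<Longrightarrow> teq T T"
| sym: "teq T T' \<Longrightarrow> teq T' T"
| trans: "teq T1 T2 \<Longrightarrow> teq T2 T3 \<Longrightarrow> teq T1 T3"
| cong_arr: "is_unit U \<Longrightarrow> is_unit U' \<Longrightarrow> teq U U' \<Longrightarrow> teq T T' \<Longrightarrow> teq (Arr U T) (Arr U' T')"
| cong_all: "teq T T' \<Longrightarrow> teq (Forall X T) (Forall X T')"
| cong_scal: "teq T T' \<Longrightarrow> teq (Scal a T) (Scal a T')"

end

theory Submission
  imports Defs
begin

lemma aux: "is_unit (U::('v, 's::comm_ring_1) ty) \<Longrightarrow> True"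
  and main: "is_type (T::('v, 's::comm_ring_1) ty) \<Longrightarrow> \<exists>U \<alpha>. is_unit U \<and> teq T (Scal \<alpha> U)"
proof (induction rule: is_unit_is_type.inducts)
  case (t_unit U)
  have "teq U (Scal 1 U)" by (rule teq.sym[OF teq.ax_one_scal[OF is_unit_is_type.t_unit[OF t_unit(1)]]])
  then show ?case using t_unit(1) by (intro exI conjI)
next
  case (t_all T X)
  then obtain U a where u: "is_unit U" "teq T (Scal a U)" by blast
  have "teq (Forall X T) (Forall X (Scal a U))" using u(2) by (rule teq.cong_all)
  moreover have "teq (Forall X (Scal a U)) (Scal a (Forall X U))"
    using u by (intro teq.ax_all_scal is_unit_is_type.t_unit)
  ultimately have "teq (Forall X T) (Scal a (Forall X U))" by (rule teq.trans)
  moreover have "is_unit (Forall X U)" using u(1) by (rule is_unit_is_type.u_all)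
  ultimately show ?case by (intro exI conjI)
next
  case (t_scal T b)
  then obtain U a where u: "is_unit U" "teq T (Scal a U)" by blast
  have "teq (Scal b T) (Scal b (Scal a U))" using u(2) by (rule teq.cong_scal)
  moreover have "teq (Scal b (Scal a U)) (Scal (b*a) U)"
    using u by (intro teq.ax_scal_scal is_unit_is_type.t_unit)
  ultimately have "teq (Scal b T) (Scal (b*a) U)" by (rule teq.trans)
  then show ?case using u(1) by (intro exI conjI)
next
  case t_zero
  have "teq (Scal 0 (TVar undefined)) (Zero :: ('v,'s) ty)"
    by (intro teq.ax_zero_scal is_unit_is_type.t_unit is_unit_is_type.u_var)
  then have "teq (Zero :: ('v,'s) ty) (Scal 0 (TVar undefined))" by (rule teq.sym)
  then show ?case using is_unit_is_type.u_var by (intro exI conjI)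
qed simp_all

theorem mainTheorem17:
  fixes T :: "('v, 's::comm_ring_1) ty"
  assumes "is_type T"
  shows "\<exists>U \<alpha>. is_unit U \<and> teq T (Scal \<alpha> U)"
  using main[OF assms] .

end
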